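(* Let $\mathcal{C}$ be a binary linear $[n,k,d]$ code and let $s$ be an integer with $1\le s\le\min(d-1,n-k)$ such that $\mathrm{Aut}(\mathcal{C})$ is $s$-fold transitive. Then there exists a parity-check matrix $\mathbf{H}$ of $\mathcal{C}$ such that for every $b\le s$ and every $I\subseteq J$ with $1\le|I|\le b$, some $\pi\in\mathrm{Aut}(\mathcal{C})$ maps $I$ to a set $\pi(I)$ that is not a stopping set of $\mathbf{H}$; in particular, $b$-SAD sets of $\mathbf{H}$ exist for all $b\le s$.
   Context: Coordinates are indexed by $J=\{0,\ldots,n-1\}$. For a binary matrix, a row resolves a nonempty $I\subseteq J$ if its restriction to $I$ has Hamming weight exactly one; $I$ is a stopping set if no row resolves it. A parity-check matrix of $\mathcal{C}$ is an $(n-k)\times n$ binary matrix of full row rank whose row space is $\mathcal{C}^\perp$. $\mathrm{Aut}(\mathcal{C})$ is the group of permutations of $J$ mapping $\mathcal{C}$ onto itself. A permutation group on $J$ is $t$-fold transitive if for any two ordered $t$-tuples of distinct elements $(i_1,\ldots,i_t)$ and $(j_1,\ldots,j_t)$ of $J$ there is a group element mapping $i_r$ to $j_r$ for all $r$. For $b\le d-1$, a $b$-SAD set of $\mathbf{H}$ is a smallest set $S\subseteq\mathrm{Aut}(\mathcal{C})$ such that every $I\subseteq J$ with $1\le|I|\le b$ is mapped by some $\pi\in S$ to a set that is not a stopping set of $\mathbf{H}$. *)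

theory Defs
  imports "HOL-Combinatorics.Permutations"
begin

text \<open>Binary vectors of length n: functions nat => bool vanishing outside J = {..<n}.
  True represents 1, False represents 0.\<close>

definition bvecs :: "nat \<Rightarrow> (nat \<Rightarrow> bool) set" where
  "bvecs n = {x. \<forall>i. n \<le> i \<longrightarrow> \<not> x i}"

definition bzero :: "nat \<Rightarrow> bool" where
  "bzero = (\<lambda>i. False)"

definition badd :: "(nat \<Rightarrow> bool) \<Rightarrow> (nat \<Rightarrow> bool) \<Rightarrow> nat \<Rightarrow> bool" where
  "badd x y = (\<lambda>i. x i \<noteq> y i)"

definition hweight :: "nat \<Rightarrow> (nat \<Rightarrow> bool) \<Rightarrow> nat" where
  "hweight n x = card {i\<in>{..<n}. x i}"

definition binary_linear_code :: "nat \<Rightarrow> (nat \<Rightarrow> bool) set \<Rightarrow> bool" where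
  "binary_linear_code n C \<longleftrightarrow> C \<subseteq> bvecs n \<and> bzero \<in> C \<and>
     (\<forall>x\<in>C. \<forall>y\<in>C. badd x y \<in> C)"

definition is_nkd_code :: "nat \<Rightarrow> nat \<Rightarrow> nat \<Rightarrow> (nat \<Rightarrow> bool) set \<Rightarrow> bool" where
  "is_nkd_code n k d C \<longleftrightarrow> binary_linear_code n C \<and> card C = 2 ^ k \<and>
     (\<exists>x\<in>C. x \<noteq> bzero \<and> hweight n x = d) \<and>
     (\<forall>x\<in>C. x \<noteq> bzero \<longrightarrow> d \<le> hweight n x)"

definition dual_code :: "nat \<Rightarrow> (nat \<Rightarrow> bool) set \<Rightarrow> (nat \<Rightarrow> bool) set" where
  "dual_code n C = {y \<in> bvecs n. \<forall>x\<in>C. even (card {i\<in>{..<n}. x i \<and> y i})}"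

text \<open>Binary matrices with m rows and n columns: H r j is the entry in row r, column j.\<close>
definition bmatrix :: "nat \<Rightarrow> nat \<Rightarrow> (nat \<Rightarrow> nat \<Rightarrow> bool) \<Rightarrow> bool" where
  "bmatrix m n H \<longleftrightarrow> (\<forall>r j. (m \<le> r \<or> n \<le> j) \<longrightarrow> \<not> H r j)"

definition row_sum :: "(nat \<Rightarrow> nat \<Rightarrow> bool) \<Rightarrow> nat set \<Rightarrow> nat \<Rightarrow> bool" where
  "row_sum H R = (\<lambda>j. odd (card {r\<in>R. H r j}))"

definition row_space :: "nat \<Rightarrow> (nat \<Rightarrow> nat \<Rightarrow> bool) \<Rightarrow> (nat \<Rightarrow> bool) set" where
  "row_space m H = row_sum H ` Pow {..<m}"

text \<open>Full row rank over GF(2): the rows are linearly independent.\<close>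
definition full_row_rank :: "nat \<Rightarrow> (nat \<Rightarrow> nat \<Rightarrow> bool) \<Rightarrow> bool" where
  "full_row_rank m H \<longleftrightarrow> inj_on (row_sum H) (Pow {..<m})"

definition parity_check_matrix ::
  "nat \<Rightarrow> nat \<Rightarrow> (nat \<Rightarrow> bool) set \<Rightarrow> (nat \<Rightarrow> nat \<Rightarrow> bool) \<Rightarrow> bool" where
  "parity_check_matrix n k C H \<longleftrightarrow> bmatrix (n - k) n H \<and> full_row_rank (n - k) H \<and>
     row_space (n - k) H = dual_code n C"

definition resolves :: "(nat \<Rightarrow> nat \<Rightarrow> bool) \<Rightarrow> nat \<Rightarrow> nat set \<Rightarrow> bool" where
  "resolves H r I \<longleftrightarrow> I \<noteq> {} \<and> card {j\<in>I. H r j} = 1"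

definition stopping_set :: "nat \<Rightarrow> (nat \<Rightarrow> nat \<Rightarrow> bool) \<Rightarrow> nat set \<Rightarrow> bool" where
  "stopping_set m H I \<longleftrightarrow> \<not> (\<exists>r<m. resolves H r I)"

text \<open>Coordinate permutation: coordinate i of x is moved to position pi i.\<close>
definition perm_vec :: "(nat \<Rightarrow> nat) \<Rightarrow> (nat \<Rightarrow> bool) \<Rightarrow> nat \<Rightarrow> bool" where
  "perm_vec \<pi> x = x \<circ> inv \<pi>"

definition Aut :: "nat \<Rightarrow> (nat \<Rightarrow> bool) set \<Rightarrow> (nat \<Rightarrow> nat) set" where
  "Aut n C = {\<pi>. \<pi> permutes {..<n} \<and> perm_vec \<pi> ` C = C}"

text \<open>t-fold transitivity on J = {..<n}; ordered t-tuples of distinct elements as lists.\<close>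
definition t_transitive :: "nat \<Rightarrow> nat \<Rightarrow> (nat \<Rightarrow> nat) set \<Rightarrow> bool" where
  "t_transitive n t G \<longleftrightarrow> (\<forall>xs ys. length xs = t \<and> length ys = t \<and> distinct xs \<and> distinct ys \<and>
      set xs \<subseteq> {..<n} \<and> set ys \<subseteq> {..<n} \<longrightarrow> (\<exists>\<pi>\<in>G. map \<pi> xs = ys))"

definition SAD_covers ::
  "nat \<Rightarrow> nat \<Rightarrow> (nat \<Rightarrow> nat \<Rightarrow> bool) \<Rightarrow> nat \<Rightarrow> (nat \<Rightarrow> nat) set \<Rightarrow> bool" where
  "SAD_covers n k H b S \<longleftrightarrow> (\<forall>I. I \<subseteq> {..<n} \<and> 1 \<le> card I \<and> card I \<le> b \<longrightarrow>
      (\<exists>\<pi>\<in>S. \<not> stopping_set (n - k) H (\<pi> ` I)))"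

definition is_SAD_set ::
  "nat \<Rightarrow> nat \<Rightarrow> (nat \<Rightarrow> bool) set \<Rightarrow> (nat \<Rightarrow> nat \<Rightarrow> bool) \<Rightarrow> nat \<Rightarrow> (nat \<Rightarrow> nat) set \<Rightarrow> bool" where
  "is_SAD_set n k C H b S \<longleftrightarrow> S \<subseteq> Aut n C \<and> SAD_covers n k H b S \<and>
     (\<forall>S'. S' \<subseteq> Aut n C \<and> SAD_covers n k H b S' \<longrightarrow> card S \<le> card S')"

end

theory Submission imports Defs begin

definition V :: "nat set \<Rightarrow> (nat \<Rightarrow> bool) set" where
  "V A = {x. \<forall>i. i \<notin> A \<longrightarrow> \<not> x i}"
definition ip :: "(nat\<Rightarrow>bool) \<Rightarrow> (nat\<Rightarrow>bool) \<Rightarrow> nat" where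
  "ip x y = card {i. x i \<and> y i}"
definition orth :: "nat set \<Rightarrow> (nat\<Rightarrow>bool) set \<Rightarrow> (nat\<Rightarrow>bool) set" where
  "orth A C = {y\<in>V A. \<forall>x\<in>C. even (ip x y)}"
definition lin :: "nat set \<Rightarrow> (nat\<Rightarrow>bool) set \<Rightarrow> bool" where
  "lin A C \<longleftrightarrow> C \<subseteq> V A \<and> bzero \<in> C \<and> (\<forall>x\<in>C. \<forall>y\<in>C. badd x y \<in> C)"

lemma parity_sd:
  assumes "finite X" "finite Y"
  shows "even (card ((X - Y) \<union> (Y - X))) \<longleftrightarrow> (even (card X) \<longleftrightarrow> even (card Y))"
proof -
  have 1: "card X = card (X - Y) + card (X \<inter> Y)"
    using assms by (metis Diff_Diff_Int Diff_subset card_Diff_subset card_mono finite_Diff le_add_diff_inverse2 Int_lower1 card_Diff_subset_Int inf_commute finite_Int)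
  have 2: "card Y = card (Y - X) + card (X \<inter> Y)"
    using assms by (metis Diff_Diff_Int Diff_subset card_Diff_subset card_mono finite_Diff le_add_diff_inverse2 Int_lower2 card_Diff_subset_Int inf_commute finite_Int)
  have 3: "card ((X - Y) \<union> (Y - X)) = card (X - Y) + card (Y - X)"
    using assms by (intro card_Un_disjoint) auto
  show ?thesis using 1 2 3 by auto
qed

lemma ip_sym: "ip x y = ip y x"
  unfolding ip_def by (metis conj_commute)

lemma V_finite_sets: "finite A \<Longrightarrow> y \<in> V A \<Longrightarrow> finite {i. x i \<and> y i}"
  unfolding V_def by (rule finite_subset[of _ A]) auto

lemma ip_badd:
  assumes "finite A" "y \<in> V A"
  shows "even (ip (badd x x') y) \<longleftrightarrow> (even (ip x y) \<longleftrightarrow> even (ip x' y))"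
proof -
  have e: "{i. badd x x' i \<and> y i} = ({i. x i \<and> y i} - {i. x' i \<and> y i}) \<union> ({i. x' i \<and> y i} - {i. x i \<and> y i})"
    unfolding badd_def by auto
  show ?thesis unfolding ip_def e
    by (rule parity_sd) (use V_finite_sets[OF assms] in auto)
qed

lemma card_V: "finite A \<Longrightarrow> finite (V A) \<and> card (V A) = 2 ^ card A"
proof -
  assume f: "finite A"
  have b: "bij_betw (\<lambda>x. {i. x i}) (V A) (Pow A)"
    by (rule bij_betw_byWitness[where f'="\<lambda>S i. i \<in> S"]) (auto simp: V_def)
  show ?thesis using bij_betw_finite[OF b] bij_betw_same_card[OF b] f by (simp add: card_Pow)
qed

lemma sum_neg_zero:
  assumes "bij_betw f X X" "\<And>x. x \<in> X \<Longrightarrow> g (f x) = - g x"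
  shows "sum g X = (0::int)"
proof -
  have "sum g X = sum (\<lambda>x. g (f x)) X" using sum.reindex_bij_betw[OF assms(1), of g] by simp
  also have "\<dots> = - sum g X" using assms(2) by (simp add: sum_negf)
  finally show ?thesis by simp
qed

lemma badd_badd: "badd (badd x y) y = x" unfolding badd_def by auto
lemma badd_V: "x \<in> V A \<Longrightarrow> y \<in> V A \<Longrightarrow> badd x y \<in> V A" unfolding badd_def V_def by auto

lemma count_lemma:
  assumes fA: "finite A" and L: "lin A C"
  shows "card C * card (orth A C) = 2 ^ card A"
proof -
  define \<chi> where "\<chi> x y = (if even (ip x y) then 1 else -1::int)" for x y
  have fV: "finite (V A)" and cV: "card (V A) = 2 ^ card A" using card_V[OF fA] by auto
  have CV: "C \<subseteq> V A" and z: "bzero \<in> C" and cl: "\<forall>x\<in>C. \<forall>y\<in>C. badd x y \<in> C" using L lin_def by auto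
  have fC: "finite C" using CV fV finite_subset by blast
  have a: "(\<Sum>y\<in>V A. \<chi> x y) = (if x = bzero then 2^card A else 0)" if xV: "x \<in> V A" for x
  proof (cases "x = bzero")
    case True
    then show ?thesis using cV by (simp add: \<chi>_def ip_def bzero_def)
  next
    case False
    then obtain i0 where xi: "x i0" unfolding bzero_def by auto
    then have i0: "i0 \<in> A" using xV V_def by auto
    define e where "e = (\<lambda>i. i = i0)"
    have eV: "e \<in> V A" using i0 by (auto simp: V_def e_def)
    have "{i. e i \<and> x i} = {i0}" unfolding e_def using xi by auto
    then have ie: "ip e x = 1" unfolding ip_def by simp
    have "sum (\<chi> x) (V A) = 0"
    proof (rule sum_neg_zero[where f="\<lambda>y. badd y e"])
      show "bij_betw (\<lambda>y. badd y e) (V A) (V A)"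
        by (rule bij_betw_byWitness[where f'="\<lambda>y. badd y e"]) (auto simp: badd_badd badd_V eV)
      fix y assume "y \<in> V A"
      have "even (ip (badd y e) x) \<longleftrightarrow> (even (ip y x) \<longleftrightarrow> even (ip e x))"
        by (rule ip_badd[OF fA xV])
      then show "\<chi> x (badd y e) = - \<chi> x y" using ie by (auto simp: \<chi>_def ip_sym)
    qed
    then show ?thesis using False by simp
  qed
  have b: "(\<Sum>x\<in>C. \<chi> x y) = (if y \<in> orth A C then int (card C) else 0)" if yV: "y \<in> V A" for y
  proof (cases "y \<in> orth A C")
    case True
    then show ?thesis by (simp add: \<chi>_def orth_def)
  next
    case False
    then obtain x0 where x0: "x0 \<in> C" "odd (ip x0 y)" using yV orth_def by auto
    have "sum (\<lambda>x. \<chi> x y) C = 0"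
    proof (rule sum_neg_zero[where f="\<lambda>x. badd x x0"])
      show "bij_betw (\<lambda>x. badd x x0) C C"
        by (rule bij_betw_byWitness[where f'="\<lambda>x. badd x x0"]) (use cl x0 in \<open>auto simp: badd_badd\<close>)
      fix x assume "x \<in> C"
      have "even (ip (badd x x0) y) \<longleftrightarrow> (even (ip x y) \<longleftrightarrow> even (ip x0 y))"
        by (rule ip_badd[OF fA yV])
      then show "\<chi> (badd x x0) y = - \<chi> x y" using x0 by (auto simp: \<chi>_def)
    qed
    then show ?thesis using False by simp
  qed
  have "(\<Sum>x\<in>C. \<Sum>y\<in>V A. \<chi> x y) = (\<Sum>x\<in>C. if x = bzero then 2^card A else 0)"
    using a CV by (intro sum.cong) auto
  also have "\<dots> = 2 ^ card A" using fC z by (simp add: sum.delta)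
  finally have s1: "(\<Sum>x\<in>C. \<Sum>y\<in>V A. \<chi> x y) = 2 ^ card A" .
  have "(\<Sum>y\<in>V A. \<Sum>x\<in>C. \<chi> x y) = (\<Sum>y\<in>V A. if y \<in> orth A C then int (card C) else 0)"
    using b by (intro sum.cong) auto
  also have "\<dots> = (\<Sum>y\<in>V A \<inter> orth A C. int (card C))" using sum.inter_restrict[OF fV, of "\<lambda>y. int (card C)" "orth A C"] by simp
  also have "V A \<inter> orth A C = orth A C" by (auto simp: orth_def)
  finally have s2: "(\<Sum>y\<in>V A. \<Sum>x\<in>C. \<chi> x y) = int (card (orth A C)) * int (card C)" by simp
  have "int (card C * card (orth A C)) = 2 ^ card A" using s1 s2 sum.swap[of "\<lambda>x y. \<chi> x y" "V A" C] by (simp add: mult.commute)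
  then show ?thesis by (metis of_nat_eq_of_nat_power_cancel_iff of_nat_numeral)
qed


lemma lin_orth:
  assumes "finite A" "C \<subseteq> V A"
  shows "lin A (orth A C)"
  unfolding lin_def
proof (intro conjI ballI)
  show "orth A C \<subseteq> V A" by (auto simp: orth_def)
  show "bzero \<in> orth A C" by (auto simp: orth_def V_def bzero_def ip_def)
  fix y y' assume y: "y \<in> orth A C" and y': "y' \<in> orth A C"
  have "even (ip x (badd y y'))" if x: "x \<in> C" for x
  proof -
    have xV: "x \<in> V A" using x assms by auto
    have "even (ip (badd y y') x) \<longleftrightarrow> (even (ip y x) \<longleftrightarrow> even (ip y' x))"
      by (rule ip_badd[OF assms(1) xV])
    then show ?thesis using x y y' by (auto simp: orth_def ip_sym)
  qed
  then show "badd y y' \<in> orth A C" using y y' badd_V by (auto simp: orth_def)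
qed

lemma double_orth:
  assumes fA: "finite A" and L: "lin A C"
  shows "orth A (orth A C) = C"
proof -
  have CV: "C \<subseteq> V A" using L lin_def by auto
  have fV: "finite (V A)" using card_V[OF fA] by auto
  have L2: "lin A (orth A C)" by (rule lin_orth[OF fA CV])
  have sub: "C \<subseteq> orth A (orth A C)" using CV by (auto simp: orth_def ip_sym)
  have c1: "card C * card (orth A C) = 2 ^ card A" by (rule count_lemma[OF fA L])
  have c2: "card (orth A C) * card (orth A (orth A C)) = 2 ^ card A" by (rule count_lemma[OF fA L2])
  have "bzero \<in> orth A C" using L2 lin_def by auto
  moreover have "finite (orth A C)" using fV finite_subset[of "orth A C" "V A"] by (auto simp: orth_def)
  ultimately have "card (orth A C) > 0" using card_gt_0_iff by blast
  then have "card (orth A (orth A C)) = card C" using c1 c2 by (metis mult.commute mult_left_cancel neq0_conv)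
  moreover have "finite (orth A (orth A C))" using fV finite_subset[of "orth A (orth A C)" "V A"] by (auto simp: orth_def)
  ultimately show ?thesis using sub card_subset_eq by metis
qed

lemma bvecs_V: "bvecs n = V {..<n}" unfolding bvecs_def V_def by auto

lemma dual_orth: "dual_code n C = orth {..<n} C"
proof -
  have "card {i\<in>{..<n}. x i \<and> y i} = ip x y" if "y \<in> bvecs n" for x y
  proof -
    have "{i\<in>{..<n}. x i \<and> y i} = {i. x i \<and> y i}" using that by (auto simp: bvecs_def not_le[symmetric])
    then show ?thesis by (simp add: ip_def)
  qed
  then show ?thesis unfolding dual_code_def orth_def bvecs_V[symmetric] by auto
qed

lemma row_sum_sd:
  assumes "finite R1" "finite R2"
  shows "badd (row_sum H R1) (row_sum H R2) = row_sum H ((R1 - R2) \<union> (R2 - R1))"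
proof
  fix j
  have e: "{r\<in>(R1 - R2) \<union> (R2 - R1). H r j} = ({r\<in>R1. H r j} - {r\<in>R2. H r j}) \<union> ({r\<in>R2. H r j} - {r\<in>R1. H r j})"
    by auto
  show "badd (row_sum H R1) (row_sum H R2) j = row_sum H ((R1 - R2) \<union> (R2 - R1)) j"
    unfolding badd_def row_sum_def e using parity_sd[of "{r\<in>R1. H r j}" "{r\<in>R2. H r j}"] assms by auto
qed

lemma row_sum_insert:
  assumes "finite R" "m \<notin> R"
  shows "row_sum H (insert m R) = badd (row_sum H R) (H m)"
proof
  fix j
  show "row_sum H (insert m R) j = badd (row_sum H R) (H m) j"
  proof (cases "H m j")
    case True
    then have "{r\<in>insert m R. H r j} = insert m {r\<in>R. H r j}" by auto
    then show ?thesis using True assms by (simp add: row_sum_def badd_def)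
  next
    case False
    then have "{r\<in>insert m R. H r j} = {r\<in>R. H r j}" by auto
    then show ?thesis using False by (simp add: row_sum_def badd_def)
  qed
qed

lemma row_sum_cong: "(\<And>r. r \<in> R \<Longrightarrow> H r = H' r) \<Longrightarrow> row_sum H R = row_sum H' R"
  unfolding row_sum_def by (metis (mono_tags, lifting) Collect_cong)

lemma row_space_cong: "(\<And>r. r < m \<Longrightarrow> H r = H' r) \<Longrightarrow> row_space m H = row_space m H'"
  unfolding row_space_def by (intro image_cong refl row_sum_cong) auto

lemma row_space_Suc:
  "row_space (Suc m) H = row_space m H \<union> (\<lambda>x. badd x (H m)) ` row_space m H"
proof -
  have "row_sum H ` (insert m ` Pow {..<m}) = (\<lambda>x. badd x (H m)) ` row_sum H ` Pow {..<m}"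
    unfolding image_image
    by (intro image_cong refl row_sum_insert) (auto intro: finite_subset)
  then show ?thesis unfolding row_space_def lessThan_Suc Pow_insert image_Un by simp
qed

lemma row_space_sub:
  assumes L: "lin A D" and rows: "\<forall>r<m. H r \<in> D"
  shows "row_space m H \<subseteq> D"
  using rows
proof (induction m)
  case 0
  have "row_sum H {} = bzero" by (auto simp: row_sum_def bzero_def)
  then show ?case using L by (auto simp: row_space_def lin_def)
next
  case (Suc m)
  then have "row_space m H \<subseteq> D" by auto
  moreover have "H m \<in> D" using Suc by auto
  ultimately show ?case using L unfolding row_space_Suc lin_def by auto
qed

lemma row_space_finite: "finite (row_space m H)"
  unfolding row_space_def by auto

lemma rank_card: "full_row_rank m H \<longleftrightarrow> card (row_space m H) = 2 ^ m"
  unfolding full_row_rank_def row_space_def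
  using card_image[of "row_sum H" "Pow {..<m}"] eq_card_imp_inj_on[of "Pow {..<m}" "row_sum H"]
  by (auto simp: card_Pow)

lemma row_space_badd:
  assumes "x \<in> row_space m H" "y \<in> row_space m H"
  shows "badd x y \<in> row_space m H"
proof -
  obtain R1 R2 where "R1 \<subseteq> {..<m}" "R2 \<subseteq> {..<m}" "x = row_sum H R1" "y = row_sum H R2"
    using assms by (auto simp: row_space_def)
  moreover have "finite R1" "finite R2" using \<open>R1 \<subseteq> {..<m}\<close> \<open>R2 \<subseteq> {..<m}\<close> finite_subset by auto
  ultimately show ?thesis using row_sum_sd[of R1 R2 H] unfolding row_space_def
    by (intro image_eqI[of _ _ "(R1 - R2) \<union> (R2 - R1)"]) auto
qed

lemma extend_one:
  assumes v: "v \<notin> row_space m H" and c: "card (row_space m H) = 2 ^ m"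
  shows "card (row_space (Suc m) (H(m := v))) = 2 ^ Suc m"
proof -
  let ?H = "H(m := v)"
  have rs: "row_space m ?H = row_space m H" by (rule row_space_cong) auto
  let ?R = "row_space m H"
  have disj: "?R \<inter> (\<lambda>x. badd x v) ` ?R = {}"
  proof (rule ccontr)
    assume "?R \<inter> (\<lambda>x. badd x v) ` ?R \<noteq> {}"
    then obtain x where x: "x \<in> ?R" "badd x v \<in> ?R" by auto
    then have "badd x (badd x v) \<in> ?R" using row_space_badd by blast
    moreover have "badd x (badd x v) = v" unfolding badd_def by auto
    ultimately show False using v by simp
  qed
  have inj: "inj_on (\<lambda>x. badd x v) ?R"
    by (rule inj_onI) (metis badd_badd)
  have "card (row_space (Suc m) ?H) = card (?R \<union> (\<lambda>x. badd x v) ` ?R)"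
    unfolding row_space_Suc rs by simp
  also have "\<dots> = card ?R + card ((\<lambda>x. badd x v) ` ?R)"
    using disj row_space_finite by (intro card_Un_disjoint) auto
  also have "\<dots> = 2 ^ Suc m" using card_image[OF inj] c by simp
  finally show ?thesis .
qed

lemma extend_many:
  assumes fA: "finite A" and L: "lin A D" and cD: "card D = 2 ^ N"
  shows "(\<forall>r<m. H r \<in> D) \<Longrightarrow> card (row_space m H) = 2 ^ m \<Longrightarrow> m + j \<le> N \<Longrightarrow>
     \<exists>H'. (\<forall>r<m. H' r = H r) \<and> (\<forall>r<m+j. H' r \<in> D) \<and> card (row_space (m+j) H') = 2 ^ (m+j)"
proof (induction j arbitrary: m H)
  case 0
  then show ?case by auto
next
  case (Suc j)
  have fD: "finite D" using L card_V[OF fA] finite_subset unfolding lin_def by blast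
  have sub: "row_space m H \<subseteq> D" by (rule row_space_sub[OF L]) (use Suc in auto)
  have "\<not> D \<subseteq> row_space m H"
  proof
    assume "D \<subseteq> row_space m H"
    then have "card D \<le> card (row_space m H)" using row_space_finite card_mono by blast
    moreover have "(2::nat) ^ m < 2 ^ N" using Suc.prems(3) by simp
    ultimately show False using cD Suc.prems(2) by simp
  qed
  then obtain v where v: "v \<in> D" "v \<notin> row_space m H" by auto
  let ?H = "H(m := v)"
  have c1: "card (row_space (Suc m) ?H) = 2 ^ Suc m" by (rule extend_one[OF v(2) Suc.prems(2)])
  have r1: "\<forall>r<Suc m. ?H r \<in> D" using Suc.prems(1) v(1) by (auto simp: less_Suc_eq)
  obtain H' where H': "\<forall>r<Suc m. H' r = ?H r" "\<forall>r<Suc m + j. H' r \<in> D"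
      "card (row_space (Suc m + j) H') = 2 ^ (Suc m + j)"
    using Suc.IH[OF r1 c1] Suc.prems(3) by auto
  show ?case using H' by (intro exI[of _ H']) auto
qed


lemma restrict_lemma:
  assumes code: "is_nkd_code n k d C" and s1: "1 \<le> s" and sd: "s \<le> d - 1" and sn: "s \<le> n"
    and r: "r < s"
  shows "\<exists>g\<in>orth {..<n} C. \<forall>j<s. g j = (j = r)"
proof -
  let ?D = "orth {..<n} C"
  let ?T = "{..<s}"
  have L: "lin {..<n} C" using code unfolding is_nkd_code_def binary_linear_code_def lin_def bvecs_V by auto
  have LD: "lin {..<n} ?D" using lin_orth[of "{..<n}" C] L lin_def by auto
  define \<rho> where "\<rho> g = (\<lambda>j. j < s \<and> g j)" for g :: "nat \<Rightarrow> bool"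
  let ?P = "\<rho> ` ?D"
  have LP: "lin ?T ?P" unfolding lin_def
  proof (intro conjI ballI)
    show "?P \<subseteq> V ?T" by (auto simp: \<rho>_def V_def)
    have "\<rho> bzero = bzero" by (auto simp: \<rho>_def bzero_def)
    then show "bzero \<in> ?P" using LD lin_def by (metis image_eqI)
    fix x y assume "x \<in> ?P" "y \<in> ?P"
    then obtain gx gy where g: "gx \<in> ?D" "gy \<in> ?D" "x = \<rho> gx" "y = \<rho> gy" by auto
    have "badd x y = \<rho> (badd gx gy)" using g by (auto simp: \<rho>_def badd_def)
    moreover have "badd gx gy \<in> ?D" using LD g lin_def by auto
    ultimately show "badd x y \<in> ?P" by auto
  qed
  have PV: "?P = V ?T"
  proof (rule ccontr)
    assume ne: "?P \<noteq> V ?T"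
    have fVT: "finite (V ?T)" and cVT: "card (V ?T) = 2 ^ s" using card_V[of ?T] by auto
    have sub: "?P \<subseteq> V ?T" using LP lin_def by auto
    then have "card ?P < 2 ^ s" using ne fVT cVT by (metis psubsetI psubset_card_mono)
    moreover have cc: "card ?P * card (orth ?T ?P) = 2 ^ s" using count_lemma[OF _ LP] by simp
    ultimately have "card (orth ?T ?P) \<noteq> 1" by auto
    moreover have "bzero \<in> orth ?T ?P" using lin_orth[of ?T ?P] sub lin_def by auto
    moreover have "finite (orth ?T ?P)" using fVT finite_subset[of "orth ?T ?P"] by (auto simp: orth_def)
    ultimately have "\<exists>z\<in>orth ?T ?P. z \<noteq> bzero"
    proof -
      assume a: "card (orth ?T ?P) \<noteq> 1" "bzero \<in> orth ?T ?P"
      show ?thesis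
      proof (rule ccontr)
        assume "\<not> ?thesis"
        then have "orth ?T ?P = {bzero}" using a(2) by auto
        then show False using a(1) by simp
      qed
    qed
    then obtain z where z: "z \<in> orth ?T ?P" "z \<noteq> bzero" by blast
    have zT: "z i \<Longrightarrow> i < s" for i using z by (auto simp: orth_def V_def)
    have "z \<in> orth {..<n} ?D"
    proof -
      have "z \<in> V {..<n}" using zT sn by (force simp: V_def)
      moreover have "even (ip g z)" if g: "g \<in> ?D" for g
      proof -
        have "{i. g i \<and> z i} = {i. \<rho> g i \<and> z i}" using zT by (auto simp: \<rho>_def)
        then have "ip g z = ip (\<rho> g) z" by (simp add: ip_def)
        moreover have "even (ip (\<rho> g) z)" using z g by (auto simp: orth_def)
        ultimately show ?thesis by simp
      qed
      ultimately show ?thesis by (auto simp: orth_def)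
    qed
    then have zC: "z \<in> C" using double_orth[OF _ L] by simp
    have "hweight n z \<le> s"
      unfolding hweight_def using zT by (intro card_mono[of "{..<s}", simplified]) auto
    then have "hweight n z < d" using sd s1 by linarith
    moreover have "d \<le> hweight n z" using code zC z(2) unfolding is_nkd_code_def by auto
    ultimately show False by simp
  qed
  have "(\<lambda>j. j = r) \<in> V ?T" using r by (auto simp: V_def)
  then obtain g where g: "g \<in> ?D" "\<rho> g = (\<lambda>j. j = r)" using PV by (metis imageE)
  have "\<forall>j<s. g j = (j = r)"
  proof (intro allI impI)
    fix j assume "j < s"
    then show "g j = (j = r)" using fun_cong[OF g(2), of j] by (simp add: \<rho>_def)
  qed
  then show ?thesis using g(1) by blast
qed


theorem lemma5:
  fixes n k d s :: nat and C :: "(nat \<Rightarrow> bool) set"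
  assumes "is_nkd_code n k d C"
    and "1 \<le> s" and "s \<le> d - 1" and "s \<le> n - k"
    and "t_transitive n s (Aut n C)"
  shows "\<exists>H. parity_check_matrix n k C H \<and>
           (\<forall>b\<le>s. \<forall>I. I \<subseteq> {..<n} \<and> 1 \<le> card I \<and> card I \<le> b \<longrightarrow>
               (\<exists>\<pi>\<in>Aut n C. \<not> stopping_set (n - k) H (\<pi> ` I))) \<and>
           (\<forall>b\<le>s. \<exists>S. is_SAD_set n k C H b S)"
proof -
  note code = assms(1) and s1 = assms(2) and sd = assms(3) and sN = assms(4) and tr = assms(5)
  define N where "N = n - k"
  let ?D = "orth {..<n} C"
  have sn: "s \<le> n" using sN by simp
  have L: "lin {..<n} C" using code unfolding is_nkd_code_def binary_linear_code_def lin_def bvecs_V by auto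
  have LD: "lin {..<n} ?D" using lin_orth[of "{..<n}" C] L lin_def by auto
  have cc: "card C * card ?D = 2 ^ n" using count_lemma[OF _ L] by simp
  have cC: "card C = 2 ^ k" using code is_nkd_code_def by auto
  have kn: "k \<le> n"
  proof (rule ccontr)
    assume "\<not> k \<le> n"
    then have "(2::nat) ^ n < 2 ^ k" by simp
    moreover have "card ?D \<ge> 1" using LD card_V[of "{..<n}"] finite_subset[of ?D "V {..<n}"]
      unfolding lin_def by (metis One_nat_def Suc_leI card_gt_0_iff empty_iff finite_lessThan)
    ultimately show False using cc cC by (metis le_less_trans mult_le_mono2 mult.right_neutral not_less)
  qed
  have cD: "card ?D = 2 ^ N"
  proof -
    have "2 ^ k * card ?D = 2 ^ k * 2 ^ N" using cc cC kn by (simp add: N_def power_add[symmetric])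
    then show ?thesis by simp
  qed
  have "\<forall>r. \<exists>h. r < s \<longrightarrow> h \<in> ?D \<and> (\<forall>j<s. h j = (j = r))"
    using restrict_lemma[OF code s1 sd sn] by metis
  then obtain g where g: "\<And>r. r < s \<Longrightarrow> g r \<in> ?D \<and> (\<forall>j<s. g r j = (j = r))" by metis
  have gsum: "row_sum g R j = (j \<in> R)" if "R \<subseteq> {..<s}" "j < s" for R j
  proof -
    have "{r\<in>R. g r j} = R \<inter> {j}" using that g by auto
    then have "card {r\<in>R. g r j} = card (R \<inter> {j})" by simp
    then show ?thesis unfolding row_sum_def by (cases "j \<in> R") auto
  qed
  have "full_row_rank s g" unfolding full_row_rank_def
  proof (rule inj_onI)
    fix R1 R2 assume R: "R1 \<in> Pow {..<s}" "R2 \<in> Pow {..<s}" "row_sum g R1 = row_sum g R2"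
    have "j \<in> R1 \<longleftrightarrow> j \<in> R2" if "j < s" for j
      using gsum[of R1 j] gsum[of R2 j] R that by auto
    then show "R1 = R2" using R(1,2) by blast
  qed
  then have cg: "card (row_space s g) = 2 ^ s" using rank_card by blast
  obtain H' where H': "\<forall>r<s. H' r = g r" "\<forall>r<s + (N - s). H' r \<in> ?D"
      "card (row_space (s + (N - s)) H') = 2 ^ (s + (N - s))"
  proof -
    have "\<forall>r<s. g r \<in> ?D" using g by blast
    moreover have "s + (N - s) \<le> N" using sN N_def by simp
    ultimately show ?thesis using extend_many[OF _ LD cD, of s g "N - s"] cg that by auto
  qed
  have sN': "s + (N - s) = N" using sN N_def by simp
  define H where "H r = (if r < N then H' r else bzero)" for r
  have HH': "H r = H' r" if "r < N" for r using that H_def by simp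
  have Hg: "H r j = (j = r)" if "r < s" "j < s" for r j using that HH'[of r] H' g sN N_def by auto
  have rsH: "row_space N H = row_space N H'" by (rule row_space_cong) (simp add: HH')
  have rows: "\<forall>r<N. H r \<in> ?D" using H' sN' HH' by auto
  have RD: "row_space N H = ?D"
  proof -
    have "row_space N H \<subseteq> ?D" by (rule row_space_sub[OF LD rows])
    moreover have "card (row_space N H) = card ?D" using rsH H'(3) sN' cD by simp
    moreover have "finite ?D" using LD card_V[of "{..<n}"] finite_subset unfolding lin_def by blast
    ultimately show ?thesis using card_subset_eq by metis
  qed
  have pcm: "parity_check_matrix n k C H"
    unfolding parity_check_matrix_def N_def[symmetric]
  proof (intro conjI)
    show "bmatrix N n H" unfolding bmatrix_def
    proof (intro allI impI)
      fix r j assume "N \<le> r \<or> n \<le> j"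
      then show "\<not> H r j"
      proof
        assume "N \<le> r" then show ?thesis by (simp add: H_def bzero_def)
      next
        assume nj: "n \<le> j"
        show ?thesis
        proof (cases "r < N")
          case True
          then have "H r \<in> V {..<n}" using rows LD lin_def by auto
          then show ?thesis using nj by (auto simp: V_def)
        qed (simp add: H_def bzero_def)
      qed
    qed
    show "full_row_rank N H" using rank_card rsH H'(3) sN' by simp
    show "row_space N H = dual_code n C" using RD dual_orth by simp
  qed
  have cover: "\<exists>\<pi>\<in>Aut n C. \<not> stopping_set N H (\<pi> ` I)"
    if I: "I \<subseteq> {..<n}" "1 \<le> card I" "card I \<le> s" for I
  proof -
    have fI: "finite I" using I(1) finite_subset by blast
    have "s - card I \<le> card ({..<n} - I)" using I sn fI by (simp add: card_Diff_subset)
    then obtain T where T: "T \<subseteq> {..<n} - I" "card T = s - card I" "finite T"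
      by (rule obtain_subset_with_card_n)
    define X where "X = I \<union> T"
    have fX: "finite X" using fI T X_def by auto
    have cX: "card X = s" unfolding X_def using T fI I by (subst card_Un_disjoint) auto
    have XI: "I \<subseteq> X" "X \<subseteq> {..<n}" using T I X_def by auto
    define xs where "xs = sorted_list_of_set X"
    have xs: "length xs = s" "distinct xs" "set xs = X" using fX cX xs_def by auto
    obtain \<pi> where \<pi>: "\<pi> \<in> Aut n C" "map \<pi> xs = [0..<s]"
      using tr xs XI sn unfolding t_transitive_def
      by (metis atLeast_upt distinct_upt length_upt lessThan_subset_iff minus_nat.diff_0)
    have "\<pi> ` X = {..<s}" using arg_cong[OF \<pi>(2), of set] xs by (simp add: atLeast_upt)
    then have pI: "\<pi> ` I \<subseteq> {..<s}" using XI by auto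
    obtain i where i: "i \<in> I" using I(2) by fastforce
    let ?r = "\<pi> i"
    have r: "?r < s" using pI i by auto
    have "{j\<in>\<pi> ` I. H ?r j} = {?r}" using pI Hg[OF r] i by auto
    then have "resolves H ?r (\<pi> ` I)" unfolding resolves_def using i by auto
    moreover have "?r < N" using r sN N_def by simp
    ultimately show ?thesis using \<pi>(1) unfolding stopping_set_def by blast
  qed
  have part2: "\<forall>b\<le>s. \<forall>I. I \<subseteq> {..<n} \<and> 1 \<le> card I \<and> card I \<le> b \<longrightarrow>
               (\<exists>\<pi>\<in>Aut n C. \<not> stopping_set (n - k) H (\<pi> ` I))"
    using cover N_def by auto
  have part3: "\<exists>S. is_SAD_set n k C H b S" if b: "b \<le> s" for b
  proof -
    let ?P = "\<lambda>S'. S' \<subseteq> Aut n C \<and> SAD_covers n k H b S'"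
    have "?P (Aut n C)" using part2 b unfolding SAD_covers_def by auto
    then obtain S where "?P S" "\<forall>y. ?P y \<longrightarrow> card S \<le> card y"
      using ex_has_least_nat[of ?P "Aut n C" card] by blast
    then show ?thesis unfolding is_SAD_set_def by blast
  qed
  show ?thesis using pcm part2 part3 by blast
qed

end
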